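(* Let $T:X\rightrightarrows X^*$ be a multivalued operator. The following are equivalent: (1) $T$ is pseudomonotone; (2) $S(T,K)\subset S(T^\rho,K)$ for all $K\subset X$; (3) $M(T^\rho,K)\subset M(T,K)$ for all $K\subset X$.
   Context: $X$ is a real Banach space with dual $X^*$ and pairing $\langle x,x^*\rangle=x^*(x)$. A multivalued operator $T:X\rightrightarrows X^*$ is identified with its graph $T\subset X\times X^*$; $T(x)=\{x^*:(x,x^* )\in T\}$. For $K\subset X$: $S(T,K)=\{x\in K: \exists x^*\in T(x),\ \langle y-x,x^*\rangle\ge0\ \forall y\in K\}$ and $M(T,K)=\{x\in K: \langle x-y,y^*\rangle\le0\ \forall (y,y^* )\in T \text{ with } y\in K\}$. For $(x,x^* ),(y,y^* )\in X\times X^*$, write $(x,x^* )\sim_p(y,y^* )$ if either $\min\{\langle x-y,y^*\rangle,\langle y-x,x^*\rangle\}<0$ or $\langle x-y,y^*\rangle=\langle y-x,x^*\rangle=0$. The pseudomonotone polar is $T^\rho=\{(x,x^* ): (x,x^* )\sim_p(y,y^* )\ \forall (y,y^* )\in T\}$. $T$ is pseudomonotone if for all $(x,x^* ),(y,y^* )\in T$, $\langle y-x,x^*\rangle\ge0$ implies $\langle y-x,y^*\rangle\ge0$. *)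

theory Defs
  imports "HOL-Analysis.Analysis"
begin

text \<open>X is a real Banach space (type class banach over the reals); its dual X* is the
space of bounded linear functionals (blinfun into real).
A multivalued operator is identified with its graph.\<close>

type_synonym 'a mop = "('a \<times> ('a \<Rightarrow>\<^sub>L real)) set"

definition pairing :: "'a::real_normed_vector \<Rightarrow> ('a \<Rightarrow>\<^sub>L real) \<Rightarrow> real" where
  "pairing x xs = blinfun_apply xs x"

definition Sol :: "'a::real_normed_vector mop \<Rightarrow> 'a set \<Rightarrow> 'a set" where
  "Sol T K = {x \<in> K. \<exists>xs. (x, xs) \<in> T \<and> (\<forall>y\<in>K. pairing (y - x) xs \<ge> 0)}"

definition Minty :: "'a::real_normed_vector mop \<Rightarrow> 'a set \<Rightarrow> 'a set" where
  "Minty T K = {x \<in> K. \<forall>y ys. (y, ys) \<in> T \<and> y \<in> K \<longrightarrow> pairing (x - y) ys \<le> 0}"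

definition sim_p :: "('a::real_normed_vector \<times> ('a \<Rightarrow>\<^sub>L real)) \<Rightarrow> ('a \<times> ('a \<Rightarrow>\<^sub>L real)) \<Rightarrow> bool" where
  "sim_p p q = (let (x, xs) = p; (y, ys) = q in
     min (pairing (x - y) ys) (pairing (y - x) xs) < 0 \<or>
     (pairing (x - y) ys = 0 \<and> pairing (y - x) xs = 0))"

definition pm_polar :: "'a::real_normed_vector mop \<Rightarrow> 'a mop" where
  "pm_polar T = {p. \<forall>q\<in>T. sim_p p q}"

definition pseudomonotone :: "'a::real_normed_vector mop \<Rightarrow> bool" where
  "pseudomonotone T = (\<forall>x xs y ys. (x, xs) \<in> T \<and> (y, ys) \<in> T \<longrightarrow>
      pairing (y - x) xs \<ge> 0 \<longrightarrow> pairing (y - x) ys \<ge> 0)"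

end

theory Submission
  imports Defs
begin

lemma pair0[simp]: "pairing 0 xs = 0"
  by (simp add: pairing_def blinfun.zero_right)

lemma pm_iff: "pseudomonotone T \<longleftrightarrow> T \<subseteq> pm_polar T"
proof
  assume P: "pseudomonotone T"
  show "T \<subseteq> pm_polar T"
  proof
    fix p assume pT: "p \<in> T"
    obtain x xs where p: "p = (x,xs)" by force
    have "sim_p (x,xs) (y,ys)" if "(y,ys) \<in> T" for y ys
    proof -
      have 1: "pairing (y - x) xs \<ge> 0 \<longrightarrow> pairing (y - x) ys \<ge> 0"
        using P pT p that unfolding pseudomonotone_def by blast
      have 2: "pairing (x - y) ys \<ge> 0 \<longrightarrow> pairing (x - y) xs \<ge> 0"
        using P pT p that unfolding pseudomonotone_def by blast
      have a: "pairing (x - y) ys = - pairing (y - x) ys"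
        by (metis minus_diff_eq pairing_def blinfun.minus_right)
      have b: "pairing (x - y) xs = - pairing (y - x) xs"
        by (metis minus_diff_eq pairing_def blinfun.minus_right)
      show ?thesis unfolding sim_p_def using 1 2 a b by (auto simp: min_def)
    qed
    then show "p \<in> pm_polar T" unfolding pm_polar_def p by auto
  qed
next
  assume S: "T \<subseteq> pm_polar T"
  show "pseudomonotone T" unfolding pseudomonotone_def
  proof (intro allI impI)
    fix x xs y ys assume h: "(x, xs) \<in> T \<and> (y, ys) \<in> T" and b: "pairing (y - x) xs \<ge> 0"
    have "sim_p (x,xs) (y,ys)" using S h unfolding pm_polar_def by auto
    then have "pairing (x - y) ys \<le> 0" using b unfolding sim_p_def by (auto simp: min_def split: if_splits)
    moreover have "pairing (x - y) ys = - pairing (y - x) ys"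
      by (metis minus_diff_eq pairing_def blinfun.minus_right)
    ultimately show "pairing (y - x) ys \<ge> 0" by simp
  qed
qed

lemma neg_pair: "pairing (x - y) ys = - pairing (y - x) ys"
  by (metis minus_diff_eq pairing_def blinfun.minus_right)

theorem mainTheorem18:
  fixes T :: "('a::banach) mop"
  shows "(pseudomonotone T \<longleftrightarrow> (\<forall>K. Sol T K \<subseteq> Sol (pm_polar T) K))
       \<and> (pseudomonotone T \<longleftrightarrow> (\<forall>K. Minty (pm_polar T) K \<subseteq> Minty T K))"
proof (intro conjI iffI allI)
  fix K assume "pseudomonotone T"
  then have "T \<subseteq> pm_polar T" using pm_iff by blast
  then show "Sol T K \<subseteq> Sol (pm_polar T) K" unfolding Sol_def by blast
next
  fix K assume "pseudomonotone T"
  then have "T \<subseteq> pm_polar T" using pm_iff by blast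
  then show "Minty (pm_polar T) K \<subseteq> Minty T K" unfolding Minty_def by blast
next
  assume A: "\<forall>K. Sol T K \<subseteq> Sol (pm_polar T) K"
  show "pseudomonotone T" unfolding pseudomonotone_def
  proof (intro allI impI)
    fix x xs y ys assume h: "(x, xs) \<in> T \<and> (y, ys) \<in> T" and b: "pairing (y - x) xs \<ge> 0"
    have "x \<in> Sol T {x,y}" unfolding Sol_def using h b by auto
    then have "x \<in> Sol (pm_polar T) {x,y}" using A by blast
    then obtain zs where z: "(x,zs) \<in> pm_polar T" "pairing (y - x) zs \<ge> 0"
      unfolding Sol_def by auto
    have "sim_p (x,zs) (y,ys)" using z h unfolding pm_polar_def by auto
    then have "pairing (x - y) ys \<le> 0" using z(2) unfolding sim_p_def by (auto simp: min_def split: if_splits)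
    then show "pairing (y - x) ys \<ge> 0" using neg_pair[of x y ys] by simp
  qed
next
  assume A: "\<forall>K. Minty (pm_polar T) K \<subseteq> Minty T K"
  show "pseudomonotone T" unfolding pseudomonotone_def
  proof (intro allI impI)
    fix x xs y ys assume h: "(x, xs) \<in> T \<and> (y, ys) \<in> T" and b: "pairing (y - x) xs \<ge> 0"
    have "x \<in> Minty (pm_polar T) {x,y}" unfolding Minty_def
    proof (safe)
      fix zs assume "(y, zs) \<in> pm_polar T"
      then have "sim_p (y,zs) (x,xs)" using h unfolding pm_polar_def by auto
      then show "pairing (x - y) zs \<le> 0" using b unfolding sim_p_def by (auto simp: min_def split: if_splits)
    qed auto
    then have "x \<in> Minty T {x,y}" using A by blast
    then have "pairing (x - y) ys \<le> 0" using h unfolding Minty_def by auto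
    then show "pairing (y - x) ys \<ge> 0" using neg_pair[of x y ys] by simp
  qed
qed

end
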